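(* Let $d,h$ be positive integers, $W_{\mathrm{in}} \in \mathbb{R}^{h\times d}$, $b_{\mathrm{in}}\in\mathbb{R}^h$, $W_{\mathrm{out}}\in\mathbb{R}^{d\times h}$, $b_{\mathrm{out}}\in\mathbb{R}^d$, and consider the residual block $f(x) = x + r(x)$ with $r(x) = W_{\mathrm{out}}\,\mathrm{ReLU}(W_{\mathrm{in}}x + b_{\mathrm{in}}) + b_{\mathrm{out}}$, $x\in\mathbb{R}^d$. Let $x$ be a random vector in $\mathbb{R}^d$ drawn from a data distribution, and define the ReLU gating matrix $D(x) = \mathrm{diag}\big(\mathbf{1}[W_{\mathrm{in}}x + b_{\mathrm{in}} > 0]\big)\in\{0,1\}^{h\times h}$ (indicator taken entrywise), together with the Jacobians $J_r(x) = W_{\mathrm{out}}D(x)W_{\mathrm{in}}$ and $J_f(x) = I_d + J_r(x)$. Suppose that (i) the block satisfies dynamic isometry in expectation, $\mathbb{E}_x[J_f(x)^\top J_f(x)] = I_d$; (ii) the residual is non-trivial, i.e. $J_r(x)\neq 0$ (so that $\mathbb{E}_x[\|J_r(x)\|_F^2]>0$); and (iii) each ReLU unit is active with probability $\tfrac12$, i.e. $\mathbb{E}_x[D(x)] = \tfrac12 I_h$. Then $\mathrm{tr}(W_{\mathrm{out}}W_{\mathrm{in}}) < 0$.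
   Context: $\mathrm{ReLU}$ is applied entrywise, $\mathrm{ReLU}(t)=\max(t,0)$. $\|\cdot\|_F$ denotes the Frobenius norm and $\mathrm{tr}$ the trace. Expectations $\mathbb{E}_x$ are over the data distribution of $x$ (assumed such that the expectations exist). *)

theory Defs
  imports "HOL-Analysis.Analysis" "HOL-Probability.Probability"
begin

text \<open>Matrices in R^(m x n) are rendered as real^'n^'m (rows indexed by 'm).
  Hidden dimension h is CARD('h), input dimension d is CARD('d).\<close>

definition relu_vec :: "real^'n \<Rightarrow> real^'n" where
  "relu_vec v = (\<chi> i. max (v $ i) 0)"

definition res_branch :: "real^'d^'h \<Rightarrow> real^'h \<Rightarrow> real^'h^'d \<Rightarrow> real^'d \<Rightarrow> real^'d \<Rightarrow> real^'d" where
  "res_branch Win bin Wout bout x = Wout *v relu_vec (Win *v x + bin) + bout"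

definition res_block :: "real^'d^'h \<Rightarrow> real^'h \<Rightarrow> real^'h^'d \<Rightarrow> real^'d \<Rightarrow> real^'d \<Rightarrow> real^'d" where
  "res_block Win bin Wout bout x = x + res_branch Win bin Wout bout x"

definition gate :: "real^'d^'h \<Rightarrow> real^'h \<Rightarrow> real^'d \<Rightarrow> real^'h^'h" where
  "gate Win bin x = (\<chi> i j. if i = j \<and> (Win *v x + bin) $ i > 0 then 1 else 0)"

definition jac_r :: "real^'d^'h \<Rightarrow> real^'h \<Rightarrow> real^'h^'d \<Rightarrow> real^'d \<Rightarrow> real^'d^'d" where
  "jac_r Win bin Wout x = Wout ** gate Win bin x ** Win"

definition jac_f :: "real^'d^'h \<Rightarrow> real^'h \<Rightarrow> real^'h^'d \<Rightarrow> real^'d \<Rightarrow> real^'d^'d" where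
  "jac_f Win bin Wout x = mat 1 + jac_r Win bin Wout x"

definition frob_norm :: "real^'n^'m \<Rightarrow> real" where
  "frob_norm A = sqrt (\<Sum>i\<in>UNIV. \<Sum>j\<in>UNIV. (A $ i $ j)^2)"

end

theory Submission
  imports Defs
begin

lemma tr_sq:
  fixes B :: "real^'d^'d"
  shows "trace (transpose (mat 1 + B) ** (mat 1 + B)) = real CARD('d) + 2 * trace B + (\<Sum>i\<in>UNIV. \<Sum>j\<in>UNIV. (B $ i $ j)^2)"
proof -
  have e: "\<And>k i. ((mat 1 + B) $ k $ i) * ((mat 1 + B) $ k $ i) = (if k = i then 1 else 0) + (if k = i then 2 * B $ i $ i else 0) + (B $ k $ i)^2"
    by (auto simp: mat_def power2_eq_square algebra_simps)
  have "trace (transpose (mat 1 + B) ** (mat 1 + B)) = (\<Sum>i\<in>UNIV. \<Sum>k\<in>UNIV. ((mat 1 + B) $ k $ i) * ((mat 1 + B) $ k $ i))"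
    by (simp add: trace_def matrix_matrix_mult_def transpose_def)
  also have "... = (\<Sum>i\<in>UNIV. 1 + 2 * B $ i $ i + (\<Sum>k\<in>UNIV. (B $ k $ i)^2))"
    unfolding e by (simp add: sum.distrib)
  also have "... = real CARD('d) + 2 * trace B + (\<Sum>i\<in>UNIV. \<Sum>j\<in>UNIV. (B $ i $ j)^2)"
    by (simp add: sum.distrib trace_def sum_distrib_left sum.swap[of "\<lambda>k i. (B $ k $ i)^2" UNIV UNIV])
  finally show ?thesis .
qed


lemma tr_lin:
  fixes X :: "'a \<Rightarrow> real^'d^'d"
  shows "trace (\<Sum>T\<in>S. c T *\<^sub>R X T) = (\<Sum>T\<in>S. c T * trace (X T))"
  by (simp add: trace_def sum_distrib_left sum.swap[where A=S])


lemma tr3: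
  fixes Wout :: "real^'h^'d" and D :: "real^'h^'h" and Win :: "real^'d^'h"
  shows "trace (Wout ** D ** Win) = (\<Sum>j\<in>UNIV. \<Sum>k\<in>UNIV. D $ j $ k * (Win ** Wout) $ k $ j)"
proof -
  have "trace (Wout ** D ** Win) = (\<Sum>i\<in>UNIV. \<Sum>k\<in>UNIV. \<Sum>j\<in>UNIV. Wout $ i $ j * D $ j $ k * Win $ k $ i)"
    by (simp add: trace_def matrix_matrix_mult_def sum_distrib_right)
  also have "... = (\<Sum>j\<in>UNIV. \<Sum>k\<in>UNIV. \<Sum>i\<in>UNIV. D $ j $ k * (Win $ k $ i * Wout $ i $ j))"
  proof -
    have "(\<Sum>i\<in>UNIV. \<Sum>k\<in>UNIV. \<Sum>j\<in>UNIV. Wout $ i $ j * D $ j $ k * Win $ k $ i) = (\<Sum>i\<in>UNIV. \<Sum>j\<in>UNIV. \<Sum>k\<in>UNIV. Wout $ i $ j * D $ j $ k * Win $ k $ i)"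
      by (rule sum.cong[OF refl], rule sum.swap)
    also have "... = (\<Sum>j\<in>UNIV. \<Sum>i\<in>UNIV. \<Sum>k\<in>UNIV. Wout $ i $ j * D $ j $ k * Win $ k $ i)"
      by (rule sum.swap)
    also have "... = (\<Sum>j\<in>UNIV. \<Sum>k\<in>UNIV. \<Sum>i\<in>UNIV. Wout $ i $ j * D $ j $ k * Win $ k $ i)"
      by (rule sum.cong[OF refl], rule sum.swap)
    finally show ?thesis by (simp add: mult.commute mult.left_commute)
  qed
  also have "... = (\<Sum>j\<in>UNIV. \<Sum>k\<in>UNIV. D $ j $ k * (Win ** Wout) $ k $ j)"
    by (simp add: matrix_matrix_mult_def sum_distrib_left)
  finally show ?thesis .
qed

definition actset :: "real^'d^'h \<Rightarrow> real^'h \<Rightarrow> real^'d \<Rightarrow> 'h set" where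
  "actset Win bin x = {i. (Win *v x + bin) $ i > 0}"

definition dg :: "'h set \<Rightarrow> real^'h^'h" where
  "dg T = (\<chi> i j. if i = j \<and> i \<in> T then 1 else 0)"

lemma gate_dg: "gate Win bin x = dg (actset Win bin x)"
  by (simp add: gate_def dg_def actset_def)

lemma actset_meas: "{x::real^'d. actset Win bin x = (T::'h::finite set)} \<in> sets borel"
proof -
  have [measurable]: "\<And>i. (\<lambda>x::real^'d. (Win *v x + bin) $ (i::'h)) \<in> borel_measurable borel"
    by (intro borel_measurable_continuous_onI continuous_intros)
  have "{x::real^'d. actset Win bin x = T} = {x. \<forall>i. (i \<in> T) = ((Win *v x + bin) $ i > 0)}"
    by (auto simp: actset_def)
  also have "... \<in> sets borel" by measurable
  finally show ?thesis .
qed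

lemma int_decomp:
  fixes M :: "(real^'d) measure" and F :: "real^'h^'h \<Rightarrow> 'b::{banach, second_countable_topology}"
  assumes "prob_space M" and "sets M = sets borel"
  shows "(\<integral>x. F (gate Win bin x) \<partial>M) = (\<Sum>T\<in>UNIV. measure M {x. actset Win bin x = T} *\<^sub>R F (dg T))"
proof -
  interpret prob_space M by fact
  have sp: "space M = UNIV" using sets_eq_imp_space_eq[OF assms(2)] by simp
  have ms: "\<And>T. {x. actset Win bin x = T} \<in> sets M" using actset_meas assms(2) by auto
  have pt: "F (gate Win bin x) = (\<Sum>T\<in>UNIV. indicator {x. actset Win bin x = T} x *\<^sub>R F (dg T))" for x
  proof -
    have "(\<Sum>T\<in>UNIV. indicator {x. actset Win bin x = T} x *\<^sub>R F (dg T)) = (\<Sum>T\<in>UNIV. if actset Win bin x = T then F (dg T) else 0)"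
      by (rule sum.cong) (auto simp: indicator_def)
    also have "... = F (dg (actset Win bin x))" by (simp add: sum.delta)
    finally show ?thesis by (simp add: gate_dg)
  qed
  have "(\<integral>x. F (gate Win bin x) \<partial>M) = (\<integral>x. (\<Sum>T\<in>UNIV. indicator {x. actset Win bin x = T} x *\<^sub>R F (dg T)) \<partial>M)"
    by (simp add: pt)
  also have "... = (\<Sum>T\<in>UNIV. (\<integral>x. indicator {x. actset Win bin x = T} x *\<^sub>R F (dg T) \<partial>M))"
    by (subst Bochner_Integration.integral_sum) (auto intro!: integrable_scaleR_left integrable_real_indicator simp: ms emeasure_eq_measure)
  also have "... = (\<Sum>T\<in>UNIV. measure M {x. actset Win bin x = T} *\<^sub>R F (dg T))"
    by (rule sum.cong[OF refl], subst integral_scaleR_left) (auto simp: ms sp emeasure_eq_measure)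
  finally show ?thesis .
qed

theorem proposition1:
  fixes M :: "(real^'d) measure"
    and Win :: "real^'d^'h" and bin :: "real^'h"
    and Wout :: "real^'h^'d" and bout :: "real^'d"
  assumes "prob_space M"
    and "sets M = sets borel"
    and iso: "(\<integral>x. transpose (jac_f Win bin Wout x) ** jac_f Win bin Wout x \<partial>M) = mat 1"
    and nontriv: "(\<integral>x. (frob_norm (jac_r Win bin Wout x))^2 \<partial>M) > 0"
    and half: "(\<integral>x. gate Win bin x \<partial>M) = (1/2) *\<^sub>R mat 1"
  shows "trace (Wout ** Win) < 0"
proof -
  interpret prob_space M by fact
  define mu where "mu T = measure M {x. actset Win bin x = T}" for T
  define E where "E D = Wout ** D ** Win" for D
  define fr where "fr T = (\<Sum>i\<in>UNIV. \<Sum>j\<in>UNIV. (E (dg T) $ i $ j)^2)" for T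
  define c where "c = Win ** Wout"
  have h1: "(\<Sum>T\<in>UNIV. mu T) = 1"
    using int_decomp[OF assms(1,2), of "\<lambda>_. (1::real)" Win bin] by (simp add: mu_def prob_space)
  have h2: "(\<Sum>T\<in>UNIV. mu T *\<^sub>R dg T) = (1/2) *\<^sub>R mat 1"
    using int_decomp[OF assms(1,2), of "\<lambda>D. D" Win bin] half by (simp add: mu_def)
  have h3: "(\<Sum>T\<in>UNIV. mu T *\<^sub>R (transpose (mat 1 + E (dg T)) ** (mat 1 + E (dg T)))) = mat 1"
    using int_decomp[OF assms(1,2), of "\<lambda>D. transpose (mat 1 + Wout ** D ** Win) ** (mat 1 + Wout ** D ** Win)" Win bin] iso
    by (simp add: mu_def E_def jac_f_def jac_r_def)
  have h4: "(\<Sum>T\<in>UNIV. mu T * fr T) > 0"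
  proof -
    have "\<And>T. (frob_norm (E (dg T)))^2 = fr T"
      by (simp add: frob_norm_def fr_def sum_nonneg)
    then show ?thesis
      using int_decomp[OF assms(1,2), of "\<lambda>D. (frob_norm (Wout ** D ** Win))^2" Win bin] nontriv
      by (simp add: mu_def E_def jac_r_def)
  qed
  have "trace (mat 1 :: real^'d^'d) = (\<Sum>T\<in>UNIV. mu T * trace (transpose (mat 1 + E (dg T)) ** (mat 1 + E (dg T))))"
    by (subst h3[symmetric]) (rule tr_lin)
  also have "... = (\<Sum>T\<in>UNIV. mu T * (real CARD('d) + 2 * trace (E (dg T)) + fr T))"
    by (simp add: tr_sq fr_def)
  also have "... = (\<Sum>T\<in>UNIV. mu T) * real CARD('d) + 2 * (\<Sum>T\<in>UNIV. mu T * trace (E (dg T))) + (\<Sum>T\<in>UNIV. mu T * fr T)"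
    by (simp add: algebra_simps sum.distrib sum_distrib_left sum_distrib_right)
  finally have e1: "2 * (\<Sum>T\<in>UNIV. mu T * trace (E (dg T))) + (\<Sum>T\<in>UNIV. mu T * fr T) = 0"
    using h1 by (simp add: trace_def mat_def)
  have "(\<Sum>T\<in>UNIV. mu T * trace (E (dg T))) = (\<Sum>T\<in>UNIV. \<Sum>j\<in>UNIV. \<Sum>k\<in>UNIV. mu T * (dg T $ j $ k * c $ k $ j))"
    by (simp add: E_def tr3 c_def sum_distrib_left)
  also have "... = (\<Sum>j\<in>UNIV. \<Sum>k\<in>UNIV. (\<Sum>T\<in>UNIV. mu T * dg T $ j $ k) * c $ k $ j)"
  proof -
    have "(\<Sum>T\<in>UNIV. \<Sum>j\<in>UNIV. \<Sum>k\<in>UNIV. mu T * (dg T $ j $ k * c $ k $ j)) = (\<Sum>j\<in>UNIV. \<Sum>T\<in>UNIV. \<Sum>k\<in>UNIV. mu T * (dg T $ j $ k * c $ k $ j))"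
      by (rule sum.swap)
    also have "... = (\<Sum>j\<in>UNIV. \<Sum>k\<in>UNIV. \<Sum>T\<in>UNIV. mu T * (dg T $ j $ k * c $ k $ j))"
      by (rule sum.cong[OF refl], rule sum.swap)
    also have "... = (\<Sum>j\<in>UNIV. \<Sum>k\<in>UNIV. (\<Sum>T\<in>UNIV. mu T * dg T $ j $ k) * c $ k $ j)"
      by (simp add: sum_distrib_right mult.assoc)
    finally show ?thesis .
  qed
  also have "... = (\<Sum>j\<in>UNIV. \<Sum>k\<in>UNIV. ((1/2) *\<^sub>R (mat 1 :: real^'h^'h)) $ j $ k * c $ k $ j)"
  proof -
    have hh: "\<And>j k. (\<Sum>T\<in>UNIV. mu T * dg T $ j $ k) = ((1/2) *\<^sub>R (mat 1 :: real^'h^'h)) $ j $ k"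
    proof -
      fix j k
      have "(\<Sum>T\<in>UNIV. mu T *\<^sub>R dg T) $ j $ k = ((1/2) *\<^sub>R (mat 1 :: real^'h^'h)) $ j $ k"
        using h2 by simp
      then show "(\<Sum>T\<in>UNIV. mu T * dg T $ j $ k) = ((1/2) *\<^sub>R (mat 1 :: real^'h^'h)) $ j $ k"
        by simp
    qed
    show ?thesis by (simp only: hh)
  qed
  also have "... = (1/2) * (\<Sum>j\<in>UNIV. c $ j $ j)"
  proof -
    have hk: "\<And>j. (\<lambda>k. ((1/2) *\<^sub>R (mat 1 :: real^'h^'h)) $ j $ k * c $ k $ j) = (\<lambda>k. if k = j then (1/2) * c $ j $ j else 0)"
      by (auto simp: mat_def)
    show ?thesis unfolding hk by (simp add: sum_distrib_left)
  qed
  also have "... = (1/2) * trace (Wout ** Win)"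
  proof -
    have "trace (Wout ** Win) = trace (Wout ** mat 1 ** Win)" by simp
    also have "... = (\<Sum>j\<in>UNIV. c $ j $ j)"
    proof -
      have hk2: "\<And>j. (\<lambda>k. (mat 1 :: real^'h^'h) $ j $ k * c $ k $ j) = (\<lambda>k. if k = j then c $ j $ j else 0)"
        by (auto simp: mat_def)
      show ?thesis unfolding tr3 c_def[symmetric] hk2 by simp
    qed
    finally show ?thesis by simp
  qed
  finally have "(\<Sum>T\<in>UNIV. mu T * trace (E (dg T))) = (1/2) * trace (Wout ** Win)" .
  with e1 h4 show ?thesis by linarith
qed

end
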